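(* Let $(X,d)\in\mathfrak U$ (with $X\cap\operatorname{Sp}(X)=\varnothing$) and let $u,v,w$ be distinct internal nodes of the representing tree $T_X$ with labels $r_u,r_v,r_w\in\operatorname{Sp}(X)$. Then $v$ and $w$ are children of $u$ if and only if $$B_{r_u}=B_{r_v}\cup B_{r_w},$$ where $B_{r_u},B_{r_v},B_{r_w}$ are the balls in $\mathbf B_X$ of radii $r_u,r_v,r_w$ respectively.
   Context: $\operatorname{Sp}(X)=\{d(x,y):x\neq y\}$, $\operatorname{diam}X=\max d(x,y)$; $\mathfrak U$ is the class of finite ultrametric spaces $X$ with $|\operatorname{Sp}(X)|=|X|-1$. For $t\in X$, $B_r(t)=\{x:d(x,t)\le r\}$, $\operatorname{Sp}_t(X)=\{d(x,t):x\neq t\}$, and $\mathbf B_X=\{B_r(t):t\in X,\ r\in\operatorname{Sp}_t(X)\}$; for $X\in\mathfrak U$ and each $r\in\operatorname{Sp}(X)$ there is exactly one ball of radius $r$ in $\mathbf B_X$. The representing tree $T_X$ is the labelled rooted tree defined recursively: for $X=\{x\}$ it is a single node labelled $x$; for $|X|\ge2$ the root is labelled $\operatorname{diam}X$ and has one child for each class $X_i$ of the equivalence relation $x\sim y\iff d(x,y)<\operatorname{diam}X$, that child being labelled $x$ if $X_i=\{x\}$ (a leaf) and otherwise labelled $\operatorname{diam}X_i$ (an internal node) and carrying the recursively constructed tree for $X_i$. Children of a node are the adjacent nodes on the next level (farther from the root). *)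

theory Defs
  imports Complex_Main
begin

definition ultrametric :: "'a set \<Rightarrow> ('a \<Rightarrow> 'a \<Rightarrow> real) \<Rightarrow> bool" where
  "ultrametric X d \<longleftrightarrow>
     (\<forall>x\<in>X. \<forall>y\<in>X. d x y \<ge> 0 \<and> (d x y = 0 \<longleftrightarrow> x = y) \<and> d x y = d y x) \<and>
     (\<forall>x\<in>X. \<forall>y\<in>X. \<forall>z\<in>X. d x y \<le> max (d x z) (d z y))"

definition Sp :: "'a set \<Rightarrow> ('a \<Rightarrow> 'a \<Rightarrow> real) \<Rightarrow> real set" where
  "Sp X d = {d x y | x y. x \<in> X \<and> y \<in> X \<and> x \<noteq> y}"

definition Sp_at :: "'a set \<Rightarrow> ('a \<Rightarrow> 'a \<Rightarrow> real) \<Rightarrow> 'a \<Rightarrow> real set" where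
  "Sp_at X d t = {d x t | x. x \<in> X \<and> x \<noteq> t}"

definition diam :: "'a set \<Rightarrow> ('a \<Rightarrow> 'a \<Rightarrow> real) \<Rightarrow> real" where
  "diam A d = Max (insert 0 {d x y | x y. x \<in> A \<and> y \<in> A})"

definition classU :: "'a set \<Rightarrow> ('a \<Rightarrow> 'a \<Rightarrow> real) \<Rightarrow> bool" where
  "classU X d \<longleftrightarrow> finite X \<and> X \<noteq> {} \<and> ultrametric X d \<and> card (Sp X d) = card X - 1"

definition cball_in :: "'a set \<Rightarrow> ('a \<Rightarrow> 'a \<Rightarrow> real) \<Rightarrow> 'a \<Rightarrow> real \<Rightarrow> 'a set" where
  "cball_in X d t r = {x \<in> X. d x t \<le> r}"

definition balls :: "'a set \<Rightarrow> ('a \<Rightarrow> 'a \<Rightarrow> real) \<Rightarrow> 'a set set" where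
  "balls X d = {cball_in X d t r | t r. t \<in> X \<and> r \<in> Sp_at X d t}"

text \<open>The (unique, for X in U) ball of \<open>B_X\<close> of radius r.\<close>
definition ball_of_radius :: "'a set \<Rightarrow> ('a \<Rightarrow> 'a \<Rightarrow> real) \<Rightarrow> real \<Rightarrow> 'a set" where
  "ball_of_radius X d r = (THE B. \<exists>t\<in>X. r \<in> Sp_at X d t \<and> B = cball_in X d t r)"

text \<open>A node of T_X is identified with the subset of X
  carried by the subtree rooted at it (X for the root, the classes X_i for the
  children, recursively). A node A is a leaf (labelled by its unique point) iff
  A is a singleton; otherwise it is an internal node labelled diam A.\<close>
definition rt_classes :: "('a \<Rightarrow> 'a \<Rightarrow> real) \<Rightarrow> 'a set \<Rightarrow> 'a set set" where
  "rt_classes d A = A // {(x, y). x \<in> A \<and> y \<in> A \<and> d x y < diam A d}"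

inductive_set rt_nodes :: "'a set \<Rightarrow> ('a \<Rightarrow> 'a \<Rightarrow> real) \<Rightarrow> 'a set set"
  for X d where
  root: "X \<in> rt_nodes X d"
| child: "A \<in> rt_nodes X d \<Longrightarrow> 2 \<le> card A \<Longrightarrow> C \<in> rt_classes d A \<Longrightarrow> C \<in> rt_nodes X d"

definition rt_internal :: "'a set \<Rightarrow> ('a \<Rightarrow> 'a \<Rightarrow> real) \<Rightarrow> 'a set \<Rightarrow> bool" where
  "rt_internal X d A \<longleftrightarrow> A \<in> rt_nodes X d \<and> 2 \<le> card A"

definition rt_label :: "('a \<Rightarrow> 'a \<Rightarrow> real) \<Rightarrow> 'a set \<Rightarrow> real" where
  "rt_label d A = diam A d"

definition rt_child :: "'a set \<Rightarrow> ('a \<Rightarrow> 'a \<Rightarrow> real) \<Rightarrow> 'a set \<Rightarrow> 'a set \<Rightarrow> bool" where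
  "rt_child X d A C \<longleftrightarrow> rt_internal X d A \<and> C \<in> rt_classes d A"

end

theory Submission imports Defs begin

context
  fixes X :: "'a set" and d :: "'a \<Rightarrow> 'a \<Rightarrow> real"
  assumes um: "ultrametric X d" and finX: "finite X"
begin

lemma d_nonneg: "x \<in> X \<Longrightarrow> y \<in> X \<Longrightarrow> 0 \<le> d x y"
  using um unfolding ultrametric_def by blast
lemma d_zero: "x \<in> X \<Longrightarrow> y \<in> X \<Longrightarrow> d x y = 0 \<longleftrightarrow> x = y"
  using um unfolding ultrametric_def by blast
lemma d_sym: "x \<in> X \<Longrightarrow> y \<in> X \<Longrightarrow> d x y = d y x"
  using um unfolding ultrametric_def by blast
lemma d_ultra: "x \<in> X \<Longrightarrow> y \<in> X \<Longrightarrow> z \<in> X \<Longrightarrow> d x y \<le> max (d x z) (d z y)"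
  using um unfolding ultrametric_def by blast
lemma d_pos: "x \<in> X \<Longrightarrow> y \<in> X \<Longrightarrow> x \<noteq> y \<Longrightarrow> 0 < d x y"
  using d_nonneg d_zero by (metis less_eq_real_def)

lemma pairs_finite: "finite A \<Longrightarrow> finite {d x y | x y. x \<in> A \<and> y \<in> A}"
proof -
  assume "finite A"
  have "{d x y | x y. x \<in> A \<and> y \<in> A} = (\<lambda>p. d (fst p) (snd p)) ` (A \<times> A)" by force
  thus ?thesis using \<open>finite A\<close> by simp
qed

lemma Sp_finite: "finite A \<Longrightarrow> finite (Sp A d)"
proof -
  assume "finite A"
  have "Sp A d \<subseteq> {d x y | x y. x \<in> A \<and> y \<in> A}" unfolding Sp_def by auto
  thus ?thesis using pairs_finite[OF \<open>finite A\<close>] finite_subset by blast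
qed

lemma diam_ge: "finite A \<Longrightarrow> x \<in> A \<Longrightarrow> y \<in> A \<Longrightarrow> d x y \<le> diam A d"
  unfolding diam_def by (rule Max_ge) (auto simp: pairs_finite)

lemma diam_nonneg: "finite A \<Longrightarrow> 0 \<le> diam A d"
  unfolding diam_def by (rule Max_ge) (auto simp: pairs_finite)

lemma diam_less: "finite A \<Longrightarrow> 0 < c \<Longrightarrow> (\<And>x y. x \<in> A \<Longrightarrow> y \<in> A \<Longrightarrow> d x y < c) \<Longrightarrow> diam A d < c"
  unfolding diam_def by (subst Max_less_iff) (auto simp: pairs_finite)

lemma diam_le: "finite A \<Longrightarrow> 0 \<le> c \<Longrightarrow> (\<And>x y. x \<in> A \<Longrightarrow> y \<in> A \<Longrightarrow> d x y \<le> c) \<Longrightarrow> diam A d \<le> c"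
  unfolding diam_def by (subst Max_le_iff) (auto simp: pairs_finite)

lemma diam_mono: "finite A \<Longrightarrow> B \<subseteq> A \<Longrightarrow> diam B d \<le> diam A d"
  by (rule diam_le) (auto intro: finite_subset diam_nonneg diam_ge)

lemma diam_attained: "finite A \<Longrightarrow> A \<subseteq> X \<Longrightarrow> A \<noteq> {} \<Longrightarrow> \<exists>x\<in>A. \<exists>y\<in>A. d x y = diam A d"
proof -
  assume f: "finite A" and s: "A \<subseteq> X" and ne: "A \<noteq> {}"
  have "diam A d \<in> insert 0 {d x y | x y. x \<in> A \<and> y \<in> A}"
    unfolding diam_def by (rule Max_in) (auto simp: pairs_finite f)
  moreover obtain a where "a \<in> A" using ne by auto
  moreover have "d a a = 0" using \<open>a \<in> A\<close> s d_zero by blast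
  ultimately show ?thesis
  proof (elim insertE)
    assume "diam A d = 0" thus ?thesis using \<open>a \<in> A\<close> \<open>d a a = 0\<close> by metis
  next
    assume "diam A d \<in> {d x y |x y. x \<in> A \<and> y \<in> A}"
    then obtain x y where "diam A d = d x y" "x \<in> A" "y \<in> A" by blast
    thus ?thesis by metis
  qed
qed

lemma two_elems: "finite A \<Longrightarrow> 2 \<le> card A \<Longrightarrow> \<exists>a\<in>A. \<exists>b\<in>A. a \<noteq> b"
  by (metis card_2_iff' card_le_Suc0_iff_eq numeral_2_eq_2 not_less_eq_eq)

lemma diam_pos: "finite A \<Longrightarrow> A \<subseteq> X \<Longrightarrow> 2 \<le> card A \<Longrightarrow> 0 < diam A d"
proof -
  assume f: "finite A" and s: "A \<subseteq> X" and c: "2 \<le> card A"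
  obtain a b where "a \<in> A" "b \<in> A" "a \<noteq> b" using two_elems[OF f c] by blast
  hence "0 < d a b" using s d_pos by blast
  thus ?thesis using diam_ge[OF f \<open>a\<in>A\<close> \<open>b\<in>A\<close>] by linarith
qed

lemma Sp_card_le: "finite A \<Longrightarrow> A \<subseteq> X \<Longrightarrow> card (Sp A d) \<le> card A - 1"
proof (induction A rule: finite_induct)
  case empty
  then show ?case by (simp add: Sp_def)
next
  case (insert x F)
  show ?case
  proof (cases "F = {}")
    case True
    then show ?thesis by (simp add: Sp_def)
  next
    case False
    have xX: "x \<in> X" and FX: "F \<subseteq> X" using insert by auto
    define m where "m = Min (d x ` F)"
    have "m \<in> d x ` F" unfolding m_def using False insert by (intro Min_in) auto
    then obtain y where y: "y \<in> F" "d x y = m" by auto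
    have ymin: "\<And>z. z \<in> F \<Longrightarrow> d x y \<le> d x z" using y insert unfolding m_def by auto
    have key: "\<And>b. b \<in> F \<Longrightarrow> d x b \<in> insert (d x y) (Sp F d)"
    proof -
      fix b assume b: "b \<in> F"
      show "d x b \<in> insert (d x y) (Sp F d)"
      proof (cases "b = y \<or> d x b = d x y")
        case True then show ?thesis by auto
      next
        case False
        hence "y \<noteq> b" "d x y < d x b" using ymin[OF b] by auto
        have bX: "b \<in> X" "y \<in> X" using b y FX by auto
        have "d x b \<le> max (d x y) (d y b)" using d_ultra xX bX by blast
        hence "d x b \<le> d y b" using \<open>d x y < d x b\<close> by linarith
        moreover have "d y b \<le> max (d y x) (d x b)" using d_ultra xX bX by blast
        moreover have "d y x = d x y" using d_sym xX bX by blast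
        ultimately have "d x b = d y b" using \<open>d x y < d x b\<close> by linarith
        thus ?thesis using \<open>y \<noteq> b\<close> b y(1) unfolding Sp_def by auto
      qed
    qed
    have "Sp (insert x F) d \<subseteq> insert (d x y) (Sp F d)"
    proof
      fix r assume "r \<in> Sp (insert x F) d"
      then obtain a b where ab: "a \<in> insert x F" "b \<in> insert x F" "a \<noteq> b" "r = d a b"
        unfolding Sp_def by auto
      show "r \<in> insert (d x y) (Sp F d)"
      proof (cases "a = x")
        case True
        then show ?thesis using ab key by auto
      next
        case False
        show ?thesis
        proof (cases "b = x")
          case True
          have "a \<in> F" using ab False by auto
          hence "r = d x a" using ab True d_sym xX FX by auto
          then show ?thesis using key \<open>a \<in> F\<close> by auto
        next
          case False2: False
          then show ?thesis using ab False unfolding Sp_def by auto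
        qed
      qed
    qed
    hence "card (Sp (insert x F) d) \<le> card (insert (d x y) (Sp F d))"
      by (intro card_mono) (auto intro: Sp_finite insert)
    also have "\<dots> \<le> Suc (card (Sp F d))" by (simp add: card_insert_if Sp_finite insert)
    also have "\<dots> \<le> Suc (card F - 1)" using insert FX by simp
    also have "\<dots> = card (insert x F) - 1" using insert False
      by (simp add: card_gt_0_iff)
    finally show ?thesis .
  qed
qed


definition rel :: "'a set \<Rightarrow> ('a \<times> 'a) set" where
  "rel A = {(x, y). x \<in> A \<and> y \<in> A \<and> d x y < diam A d}"

lemma classes_def': "rt_classes d A = A // rel A"
  unfolding rt_classes_def rel_def by simp

lemma equiv_rel: assumes "finite A" "A \<subseteq> X" "2 \<le> card A" shows "equiv A (rel A)"
proof (rule equivI)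
  show "rel A \<subseteq> A \<times> A" unfolding rel_def by auto
  have p: "0 < diam A d" using diam_pos assms by blast
  show "refl_on A (rel A)" unfolding refl_on_def rel_def using p d_zero assms(2) by (metis (no_types, lifting) case_prodI mem_Collect_eq subsetD)
  show "sym (rel A)" unfolding sym_def rel_def using d_sym assms(2) by (auto, metis subsetD)
  show "trans (rel A)"
  proof (rule transI)
    fix x y z assume a: "(x, y) \<in> rel A" "(y, z) \<in> rel A"
    hence h: "x \<in> A" "y \<in> A" "d x y < diam A d" "z \<in> A" "d y z < diam A d" unfolding rel_def by auto
    moreover have "d x z \<le> max (d x y) (d y z)" using d_ultra assms(2) h by blast
    ultimately show "(x, z) \<in> rel A" unfolding rel_def by auto
  qed
qed

lemma rel_class: "y \<in> rel A `` {x} \<longleftrightarrow> x \<in> A \<and> y \<in> A \<and> d x y < diam A d"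
  unfolding rel_def by auto

lemma classes_basic:
  assumes "finite A" "A \<subseteq> X" "2 \<le> card A"
  shows "finite (rt_classes d A)" "\<Union>(rt_classes d A) = A"
    "\<And>C. C \<in> rt_classes d A \<Longrightarrow> C \<noteq> {} \<and> C \<subseteq> A \<and> finite C"
    "\<And>C1 C2. C1 \<in> rt_classes d A \<Longrightarrow> C2 \<in> rt_classes d A \<Longrightarrow> C1 = C2 \<or> C1 \<inter> C2 = {}"
proof -
  have e: "equiv A (rel A)" using equiv_rel assms by blast
  show "finite (rt_classes d A)" unfolding classes_def'
    by (rule finite_quotient) (use assms in \<open>auto simp: rel_def\<close>)
  show "\<Union>(rt_classes d A) = A" unfolding classes_def' using Union_quotient[OF e] .
  show "\<And>C. C \<in> rt_classes d A \<Longrightarrow> C \<noteq> {} \<and> C \<subseteq> A \<and> finite C"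
    unfolding classes_def' using in_quotient_imp_non_empty[OF e] in_quotient_imp_subset[OF e]
      assms(1) finite_subset by metis
  show "\<And>C1 C2. C1 \<in> rt_classes d A \<Longrightarrow> C2 \<in> rt_classes d A \<Longrightarrow> C1 = C2 \<or> C1 \<inter> C2 = {}"
    unfolding classes_def' using quotient_disj[OF e] by blast
qed

lemma class_of:
  assumes "finite A" "A \<subseteq> X" "2 \<le> card A" "x \<in> A"
  shows "rel A `` {x} \<in> rt_classes d A" "x \<in> rel A `` {x}"
  using quotientI[OF assms(4)] equiv_class_self[OF equiv_rel[OF assms(1-3)] assms(4)]
  unfolding classes_def' by auto

lemma same_class:
  assumes "finite A" "A \<subseteq> X" "2 \<le> card A" "C \<in> rt_classes d A" "x \<in> C" "y \<in> A"
  shows "y \<in> C \<longleftrightarrow> d x y < diam A d"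
proof -
  have e: "equiv A (rel A)" using equiv_rel assms by blast
  obtain z where z: "C = rel A `` {z}" "z \<in> A" using assms(4) unfolding classes_def' by (auto elim: quotientE)
  have "C = rel A `` {x}" using z assms(5) e
    by (metis equiv_class_eq_iff Image_singleton_iff)
  thus ?thesis using rel_class assms(5,6) by (metis Image_singleton_iff rel_class)
qed

lemma class_diam:
  assumes "finite A" "A \<subseteq> X" "2 \<le> card A" "C \<in> rt_classes d A"
  shows "diam C d < diam A d"
proof -
  have C: "C \<noteq> {} \<and> C \<subseteq> A \<and> finite C" using classes_basic(3)[OF assms(1-3) assms(4)] .
  show ?thesis
  proof (rule diam_less)
    show "finite C" using C by blast
    show "0 < diam A d" using diam_pos assms by blast
    fix x y assume "x \<in> C" "y \<in> C"
    thus "d x y < diam A d" using same_class[OF assms(1-4)] C by blast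
  qed
qed

lemma card_K_ge2:
  assumes "finite A" "A \<subseteq> X" "2 \<le> card A"
  shows "2 \<le> card (rt_classes d A)"
proof -
  obtain a b where ab: "a \<in> A" "b \<in> A" "d a b = diam A d"
    using diam_attained[OF assms(1,2)] assms(3) by fastforce
  define Ca where "Ca = rel A `` {a}"
  define Cb where "Cb = rel A `` {b}"
  have "Ca \<in> rt_classes d A" "a \<in> Ca" "Cb \<in> rt_classes d A" "b \<in> Cb"
    using class_of assms ab unfolding Ca_def Cb_def by blast+
  moreover have "b \<notin> Ca" using same_class[OF assms \<open>Ca \<in> rt_classes d A\<close> \<open>a \<in> Ca\<close> ab(2)] ab(3) by simp
  ultimately have "Ca \<noteq> Cb" by blast
  hence "card {Ca, Cb} = 2" by simp
  moreover have "{Ca, Cb} \<subseteq> rt_classes d A" using \<open>Ca \<in> _\<close> \<open>Cb \<in> _\<close> by blast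
  ultimately show ?thesis using card_mono classes_basic(1)[OF assms] by metis
qed

lemma card_sum:
  assumes "finite A" "A \<subseteq> X" "2 \<le> card A"
  shows "card A = (\<Sum>C\<in>rt_classes d A. card C)"
proof -
  have "card (\<Union>(rt_classes d A)) = (\<Sum>C\<in>rt_classes d A. card C)"
    by (rule card_Union_disjoint) (use classes_basic[OF assms] in \<open>auto simp: pairwise_def disjnt_def; blast\<close>)+
  thus ?thesis using classes_basic(2)[OF assms] by simp
qed

lemma Sp_sub:
  assumes "finite A" "A \<subseteq> X" "2 \<le> card A"
  shows "Sp A d \<subseteq> insert (diam A d) (\<Union>C\<in>rt_classes d A. Sp C d)"
proof
  fix r assume "r \<in> Sp A d"
  then obtain x y where xy: "x \<in> A" "y \<in> A" "x \<noteq> y" "r = d x y" unfolding Sp_def by auto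
  show "r \<in> insert (diam A d) (\<Union>C\<in>rt_classes d A. Sp C d)"
  proof (cases "d x y < diam A d")
    case True
    define C where "C = rel A `` {x}"
    have C: "C \<in> rt_classes d A" "x \<in> C" using class_of assms xy unfolding C_def by blast+
    have "y \<in> C" using same_class[OF assms C xy(2)] True by simp
    hence "r \<in> Sp C d" using C xy unfolding Sp_def by auto
    thus ?thesis using C by blast
  next
    case False
    hence "r = diam A d" using diam_ge[OF assms(1) xy(1,2)] xy(4) by linarith
    thus ?thesis by blast
  qed
qed

lemma card_UN_overlap:
  assumes "finite K" "\<And>C. C \<in> K \<Longrightarrow> finite (f C)" "C1 \<in> K" "C2 \<in> K" "C1 \<noteq> C2"
    "f C1 \<inter> f C2 \<noteq> {}"
  shows "card (\<Union>C\<in>K. f C) < (\<Sum>C\<in>K. card (f C))"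
proof -
  let ?K = "K - {C1, C2}"
  have "(\<Union>C\<in>K. f C) = (f C1 \<union> f C2) \<union> (\<Union>C\<in>?K. f C)" using assms by blast
  hence "card (\<Union>C\<in>K. f C) \<le> card (f C1 \<union> f C2) + card (\<Union>C\<in>?K. f C)"
    by (metis card_Un_le)
  also have "card (f C1 \<union> f C2) < card (f C1) + card (f C2)"
  proof -
    have "card (f C1 \<union> f C2) + card (f C1 \<inter> f C2) = card (f C1) + card (f C2)"
      using card_Un_Int assms by metis
    moreover have "card (f C1 \<inter> f C2) > 0" using assms by (simp add: card_gt_0_iff)
    ultimately show ?thesis by linarith
  qed
  moreover have "card (\<Union>C\<in>?K. f C) \<le> (\<Sum>C\<in>?K. card (f C))" using card_UN_le assms by blast
  moreover have "(\<Sum>C\<in>K. card (f C)) = card (f C1) + card (f C2) + (\<Sum>C\<in>?K. card (f C))"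
  proof -
    have "(\<Sum>C\<in>K. card (f C)) = card (f C1) + (\<Sum>C\<in>K-{C1}. card (f C))"
      using assms by (simp add: sum.remove)
    also have "(\<Sum>C\<in>K-{C1}. card (f C)) = card (f C2) + (\<Sum>C\<in>K-{C1}-{C2}. card (f C))"
      using assms by (intro sum.remove) auto
    finally show ?thesis by (simp add: Diff_insert2[symmetric] insert_commute)
  qed
  ultimately show ?thesis by linarith
qed

definition dfc :: "'a set \<Rightarrow> int" where
  "dfc A = int (card A) - 1 - int (card (Sp A d))"

lemma dfc_nonneg: "finite A \<Longrightarrow> A \<subseteq> X \<Longrightarrow> A \<noteq> {} \<Longrightarrow> 0 \<le> dfc A"
proof -
  assume a: "finite A" "A \<subseteq> X" "A \<noteq> {}"
  hence "card A \<ge> 1" by (simp add: Suc_leI card_gt_0_iff)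
  thus ?thesis using Sp_card_le[OF a(1,2)] unfolding dfc_def by linarith
qed

lemma dfc_main:
  assumes "finite A" "A \<subseteq> X" "2 \<le> card A"
  shows "(\<Sum>C\<in>rt_classes d A. dfc C) + int (card (rt_classes d A)) - 2
      + ((\<Sum>C\<in>rt_classes d A. int (card (Sp C d))) - int (card (\<Union>C\<in>rt_classes d A. Sp C d))) \<le> dfc A"
proof -
  let ?K = "rt_classes d A"
  have fK: "finite ?K" using classes_basic(1)[OF assms] .
  have "card (Sp A d) \<le> card (insert (diam A d) (\<Union>C\<in>?K. Sp C d))"
    by (rule card_mono) (use Sp_sub[OF assms] fK classes_basic(3)[OF assms] Sp_finite in auto)
  also have "\<dots> \<le> Suc (card (\<Union>C\<in>?K. Sp C d))" by (metis card_insert_le_m1 diff_Suc_1 le_SucI zero_less_Suc card_insert_if order_refl Suc_n_not_le_n)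
  finally have 1: "card (Sp A d) \<le> Suc (card (\<Union>C\<in>?K. Sp C d))" .
  have 2: "int (card A) = (\<Sum>C\<in>?K. int (card C))" using card_sum[OF assms] by simp
  have 3: "(\<Sum>C\<in>?K. dfc C) = (\<Sum>C\<in>?K. int (card C)) - int (card ?K) - (\<Sum>C\<in>?K. int (card (Sp C d)))"
    unfolding dfc_def by (simp add: sum_subtractf)
  show ?thesis using 1 2 3 unfolding dfc_def by linarith
qed

context
  assumes Xne: "X \<noteq> {}" and cardSp: "card (Sp X d) = card X - 1"
begin

lemma node_inv: "A \<in> rt_nodes X d \<Longrightarrow> A \<subseteq> X \<and> A \<noteq> {} \<and> (\<forall>t\<in>A. \<forall>x\<in>X-A. diam A d < d x t)"
proof (induction rule: rt_nodes.induct)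
  case root
  then show ?case using Xne by auto
next
  case (child A C)
  have fA: "finite A" using child finX finite_subset by blast
  have AX: "A \<subseteq> X" using child by blast
  have C: "C \<noteq> {} \<and> C \<subseteq> A \<and> finite C" using classes_basic(3)[OF fA AX child(2) child(3)] .
  have dC: "diam C d < diam A d" using class_diam[OF fA AX child(2) child(3)] .
  have "\<forall>t\<in>C. \<forall>x\<in>X-C. diam C d < d x t"
  proof (intro ballI)
    fix t x assume t: "t \<in> C" and x: "x \<in> X - C"
    show "diam C d < d x t"
    proof (cases "x \<in> A")
      case True
      hence "\<not> d t x < diam A d" using same_class[OF fA AX child(2) child(3) t True] x by blast
      moreover have "d t x = d x t" using d_sym x t C AX by blast
      ultimately show ?thesis using dC by linarith
    next
      case False
      have "t \<in> A" "x \<in> X - A" using t x C False by auto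
      hence "diam A d < d x t" using child.IH by blast
      thus ?thesis using dC by linarith
    qed
  qed
  thus ?case using C AX by blast
qed

lemma node_fin: "A \<in> rt_nodes X d \<Longrightarrow> finite A"
  using node_inv finX finite_subset by blast

lemma ball_eq: assumes "A \<in> rt_nodes X d" "t \<in> A" shows "cball_in X d t (diam A d) = A"
proof -
  have I: "A \<subseteq> X \<and> A \<noteq> {} \<and> (\<forall>t\<in>A. \<forall>x\<in>X-A. diam A d < d x t)" using node_inv assms(1) .
  have f: "finite A" using node_fin assms(1) .
  show ?thesis unfolding cball_in_def
  proof (intro equalityI subsetI)
    fix x assume "x \<in> {x \<in> X. d x t \<le> diam A d}"
    hence "x \<in> X" "d x t \<le> diam A d" by auto
    thus "x \<in> A" using I assms(2) by (meson DiffI not_less)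
  next
    fix x assume "x \<in> A"
    thus "x \<in> {x \<in> X. d x t \<le> diam A d}" using I diam_ge[OF f \<open>x \<in> A\<close> assms(2)] by blast
  qed
qed

lemma dfc_X: "dfc X = 0"
proof -
  have "card X \<ge> 1" using Xne finX by (simp add: Suc_leI card_gt_0_iff)
  thus ?thesis unfolding dfc_def using cardSp by simp
qed

lemma dfc_step:
  assumes "finite A" "A \<subseteq> X" "2 \<le> card A" "C \<in> rt_classes d A"
  shows "dfc C \<le> dfc A"
proof -
  let ?K = "rt_classes d A"
  have fK: "finite ?K" using classes_basic(1)[OF assms(1-3)] .
  have nn: "\<And>C. C \<in> ?K \<Longrightarrow> 0 \<le> dfc C"
    using classes_basic(3)[OF assms(1-3)] dfc_nonneg assms(2) by blast
  have "dfc C \<le> (\<Sum>C\<in>?K. dfc C)" using member_le_sum[OF assms(4)] nn fK by blast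
  moreover have "2 \<le> card ?K" using card_K_ge2[OF assms(1-3)] .
  moreover have "card (\<Union>C\<in>?K. Sp C d) \<le> (\<Sum>C\<in>?K. card (Sp C d))" using card_UN_le fK by blast
  hence "int (card (\<Union>C\<in>?K. Sp C d)) \<le> (\<Sum>C\<in>?K. int (card (Sp C d)))" by (metis of_nat_le_iff of_nat_sum)
  ultimately show ?thesis using dfc_main[OF assms(1-3)] by linarith
qed

lemma dfc_node: "A \<in> rt_nodes X d \<Longrightarrow> dfc A \<le> dfc X"
proof (induction rule: rt_nodes.induct)
  case root then show ?case by simp
next
  case (child A C)
  have "dfc C \<le> dfc A" using dfc_step[OF node_fin[OF child(1)] _ child(2,3)] node_inv[OF child(1)] by blast
  thus ?case using child by linarith
qed

lemma internal_props:
  assumes "A \<in> rt_nodes X d" "2 \<le> card A"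
  shows "card (rt_classes d A) = 2"
    "\<And>C1 C2. C1 \<in> rt_classes d A \<Longrightarrow> C2 \<in> rt_classes d A \<Longrightarrow> C1 \<noteq> C2 \<Longrightarrow> Sp C1 d \<inter> Sp C2 d = {}"
proof -
  let ?K = "rt_classes d A"
  have fA: "finite A" and AX: "A \<subseteq> X" using node_fin node_inv assms by blast+
  have fK: "finite ?K" using classes_basic(1)[OF fA AX assms(2)] .
  have d0: "dfc A \<le> 0" using dfc_node[OF assms(1)] dfc_X by simp
  have nn: "\<And>C. C \<in> ?K \<Longrightarrow> 0 \<le> dfc C"
    using classes_basic(3)[OF fA AX assms(2)] dfc_nonneg AX by blast
  have s0: "0 \<le> (\<Sum>C\<in>?K. dfc C)" using nn by (rule sum_nonneg)
  have "card (\<Union>C\<in>?K. Sp C d) \<le> (\<Sum>C\<in>?K. card (Sp C d))" using card_UN_le fK by blast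
  hence p0: "int (card (\<Union>C\<in>?K. Sp C d)) \<le> (\<Sum>C\<in>?K. int (card (Sp C d)))" by (metis of_nat_le_iff of_nat_sum)
  note m = dfc_main[OF fA AX assms(2)]
  show "card ?K = 2" using card_K_ge2[OF fA AX assms(2)] m d0 s0 p0 by linarith
  fix C1 C2 assume c: "C1 \<in> ?K" "C2 \<in> ?K" "C1 \<noteq> C2"
  show "Sp C1 d \<inter> Sp C2 d = {}"
  proof (rule ccontr)
    assume "Sp C1 d \<inter> Sp C2 d \<noteq> {}"
    moreover have "\<And>C. C \<in> ?K \<Longrightarrow> finite (Sp C d)"
      using Sp_finite classes_basic(3)[OF fA AX assms(2)] by blast
    ultimately have "card (\<Union>C\<in>?K. Sp C d) < (\<Sum>C\<in>?K. card (Sp C d))"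
      using card_UN_overlap[OF fK _ c, of "\<lambda>C. Sp C d"] by blast
    hence "int (card (\<Union>C\<in>?K. Sp C d)) < (\<Sum>C\<in>?K. int (card (Sp C d)))" by (metis of_nat_less_iff of_nat_sum)
    thus False using card_K_ge2[OF fA AX assms(2)] m d0 s0 by linarith
  qed
qed

lemma sub_class:
  assumes "A \<in> rt_nodes X d" "B \<in> rt_nodes X d" "B \<subseteq> A" "B \<noteq> A"
  shows "2 \<le> card A" "\<exists>C\<in>rt_classes d A. B \<subseteq> C"
proof -
  have fA: "finite A" and AX: "A \<subseteq> X" using node_fin node_inv assms by blast+
  have IB: "B \<noteq> {} \<and> (\<forall>t\<in>B. \<forall>x\<in>X-B. diam B d < d x t)" using node_inv assms(2) by blast
  have "card B < card A" using assms fA psubset_card_mono by blast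
  moreover have "card B \<ge> 1" using IB node_fin[OF assms(2)] by (simp add: Suc_leI card_gt_0_iff)
  ultimately show c2: "2 \<le> card A" by linarith
  obtain b where b: "b \<in> B" using IB by blast
  obtain a where a: "a \<in> A" "a \<notin> B" using assms by blast
  have "diam B d < d a b" using IB a b AX by blast
  moreover have "d a b \<le> diam A d" using diam_ge[OF fA a(1)] b assms(3) by blast
  ultimately have lt: "diam B d < diam A d" by linarith
  define C where "C = rel A `` {b}"
  have C: "C \<in> rt_classes d A" "b \<in> C" using class_of[OF fA AX c2] b assms(3) unfolding C_def by blast+
  have "B \<subseteq> C"
  proof
    fix y assume "y \<in> B"
    have "d b y \<le> diam B d" using diam_ge[OF node_fin[OF assms(2)] b \<open>y \<in> B\<close>] .
    thus "y \<in> C" using same_class[OF fA AX c2 C(1) C(2)] lt \<open>y \<in> B\<close> assms(3) by auto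
  qed
  thus "\<exists>C\<in>rt_classes d A. B \<subseteq> C" using C by blast
qed

lemma Sp_mono: "B \<subseteq> A \<Longrightarrow> Sp B d \<subseteq> Sp A d"
  unfolding Sp_def by blast

lemma t_in_u:
  assumes u: "u \<in> rt_nodes X d" "2 \<le> card u" and t: "t \<in> X" and r: "diam u d \<in> Sp_at X d t"
  shows "t \<in> u"
proof (rule ccontr)
  assume tu: "t \<notin> u"
  let ?P = "\<lambda>n. \<exists>A. A \<in> rt_nodes X d \<and> u \<subseteq> A \<and> t \<in> A \<and> card A = n"
  have "?P (card X)" using node_inv[OF u(1)] t by (intro exI[of _ X]) (auto intro: rt_nodes.root)
  hence "?P (LEAST n. ?P n)" by (rule LeastI)
  then obtain A where A: "A \<in> rt_nodes X d" "u \<subseteq> A" "t \<in> A" and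
    minA: "\<And>B. B \<in> rt_nodes X d \<Longrightarrow> u \<subseteq> B \<Longrightarrow> t \<in> B \<Longrightarrow> card A \<le> card B"
    by (metis (mono_tags, lifting) Least_le)
  have uA: "u \<noteq> A" using tu A by blast
  have c2: "2 \<le> card A" using sub_class(1)[OF A(1) u(1) A(2) uA] .
  obtain C1 where C1: "C1 \<in> rt_classes d A" "u \<subseteq> C1" using sub_class(2)[OF A(1) u(1) A(2) uA] by blast
  have fA: "finite A" and AX: "A \<subseteq> X" using node_fin node_inv A by blast+
  define C2 where "C2 = rel A `` {t}"
  have C2: "C2 \<in> rt_classes d A" "t \<in> C2" using class_of[OF fA AX c2 A(3)] unfolding C2_def by blast+
  have C1fin: "C1 \<noteq> {} \<and> C1 \<subseteq> A \<and> finite C1" using classes_basic(3)[OF fA AX c2 C1(1)] .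
  have dC1: "diam C1 d < diam A d" using class_diam[OF fA AX c2 C1(1)] .
  have ne: "C1 \<noteq> C2"
  proof
    assume "C1 = C2"
    hence "C1 \<in> rt_nodes X d" "u \<subseteq> C1" "t \<in> C1" using C1 C2 A c2 rt_nodes.child by blast+
    hence "card A \<le> card C1" using minA by blast
    moreover have "C1 \<noteq> A" using dC1 by blast
    hence "card C1 < card A" using C1fin fA psubset_card_mono by blast
    ultimately show False by linarith
  qed
  obtain x where x: "x \<in> X" "x \<noteq> t" "d x t = diam u d" using r unfolding Sp_at_def by auto
  have du: "diam u d \<le> diam C1 d" using diam_mono C1 C1fin by blast
  have xC2: "x \<in> C2"
  proof (rule ccontr)
    assume xn: "x \<notin> C2"
    show False
    proof (cases "x \<in> A")
      case True
      hence "\<not> d t x < diam A d" using same_class[OF fA AX c2 C2(1) C2(2) True] xn by blast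
      moreover have "d t x = d x t" using d_sym x t by blast
      ultimately show False using x du dC1 by linarith
    next
      case False
      hence "diam A d < d x t" using node_inv[OF A(1)] A(3) x by blast
      thus False using x du dC1 by linarith
    qed
  qed
  have "diam u d \<in> Sp C2 d" unfolding Sp_def mem_Collect_eq
    by (rule exI[of _ x], rule exI[of _ t]) (use xC2 C2 x in auto)
  moreover obtain a b where ab: "a \<in> u" "b \<in> u" "d a b = diam u d"
    using diam_attained[OF node_fin[OF u(1)]] node_inv[OF u(1)] by blast
  have "a \<noteq> b"
  proof
    assume "a = b"
    hence "d a b = 0" using d_zero ab node_inv[OF u(1)] by blast
    thus False using ab(3) diam_pos[OF node_fin[OF u(1)]] node_inv[OF u(1)] u(2) by linarith
  qed
  have "diam u d \<in> Sp C1 d" unfolding Sp_def mem_Collect_eq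
    by (rule exI[of _ a], rule exI[of _ b]) (use ab C1 \<open>a \<noteq> b\<close> in auto)
  ultimately show False using internal_props(2)[OF A(1) c2 C1(1) C2(1) ne] by blast
qed

lemma ball_of_radius_node:
  assumes u: "u \<in> rt_nodes X d" "2 \<le> card u"
  shows "ball_of_radius X d (diam u d) = u"
  unfolding ball_of_radius_def
proof (rule the_equality)
  obtain a b where ab: "a \<in> u" "b \<in> u" "d a b = diam u d"
    using diam_attained[OF node_fin[OF u(1)]] node_inv[OF u(1)] by blast
  have "a \<noteq> b"
  proof
    assume "a = b"
    hence "d a b = 0" using d_zero ab node_inv[OF u(1)] by blast
    thus False using ab(3) diam_pos[OF node_fin[OF u(1)]] node_inv[OF u(1)] u(2) by linarith
  qed
  have "diam u d \<in> Sp_at X d b" unfolding Sp_at_def mem_Collect_eq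
    by (rule exI[of _ a]) (use ab node_inv[OF u(1)] \<open>a \<noteq> b\<close> in auto)
  thus "\<exists>t\<in>X. diam u d \<in> Sp_at X d t \<and> u = cball_in X d t (diam u d)"
    using ball_eq[OF u(1) ab(2)] ab(2) node_inv[OF u(1)] by blast
next
  fix B assume "\<exists>t\<in>X. diam u d \<in> Sp_at X d t \<and> B = cball_in X d t (diam u d)"
  then obtain t where "t \<in> X" "diam u d \<in> Sp_at X d t" "B = cball_in X d t (diam u d)" by blast
  thus "B = u" using t_in_u[OF u] ball_eq[OF u(1)] by blast
qed

end
end

theorem lemma23:
  fixes X :: "'a set" and d :: "'a \<Rightarrow> 'a \<Rightarrow> real" and u v w :: "'a set"
  assumes "classU X d"
    and "rt_internal X d u" and "rt_internal X d v" and "rt_internal X d w"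
    and "u \<noteq> v" and "u \<noteq> w" and "v \<noteq> w"
  shows "(rt_child X d u v \<and> rt_child X d u w) \<longleftrightarrow>
         ball_of_radius X d (rt_label d u) =
           ball_of_radius X d (rt_label d v) \<union> ball_of_radius X d (rt_label d w)"
proof -
  have um: "ultrametric X d" and finX: "finite X" and Xne: "X \<noteq> {}"
    and cS: "card (Sp X d) = card X - 1" using assms(1) unfolding classU_def by auto
  note ctx = um finX Xne cS
  have u: "u \<in> rt_nodes X d" "2 \<le> card u" and v: "v \<in> rt_nodes X d" "2 \<le> card v"
    and w: "w \<in> rt_nodes X d" "2 \<le> card w" using assms(2-4) unfolding rt_internal_def by auto
  have bu: "ball_of_radius X d (rt_label d u) = u"
    unfolding rt_label_def using ball_of_radius_node[OF ctx u] .
  have bv: "ball_of_radius X d (rt_label d v) = v"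
    unfolding rt_label_def using ball_of_radius_node[OF ctx v] .
  have bw: "ball_of_radius X d (rt_label d w) = w"
    unfolding rt_label_def using ball_of_radius_node[OF ctx w] .
  have fu: "finite u" and uX: "u \<subseteq> X" using node_fin[OF ctx u(1)] node_inv[OF ctx u(1)] by blast+
  let ?K = "rt_classes d u"
  have fK: "finite ?K" using classes_basic(1)[OF um finX fu uX u(2)] .
  have UK: "\<Union>?K = u" using classes_basic(2)[OF um finX fu uX u(2)] .
  have cK: "card ?K = 2" using internal_props(1)[OF ctx u] .
  show ?thesis unfolding bu bv bw
  proof
    assume "rt_child X d u v \<and> rt_child X d u w"
    hence vK: "v \<in> ?K" and wK: "w \<in> ?K" unfolding rt_child_def by auto
    have sub: "{v, w} \<subseteq> ?K" using vK wK by simp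
    have cc: "card {v, w} = card ?K" using cK assms(7) by simp
    have eq: "{v, w} = ?K" by (rule card_subset_eq[OF fK sub cc])
    have "\<Union>{v, w} = u" unfolding eq by (rule UK)
    thus "u = v \<union> w" by simp
  next
    assume uvw: "u = v \<union> w"
    have vu: "v \<subseteq> u" and wu: "w \<subseteq> u" using uvw by simp_all
    obtain C1 where C1: "C1 \<in> ?K" "v \<subseteq> C1"
      using sub_class(2)[OF ctx u(1) v(1) vu assms(5)[symmetric]] by blast
    obtain C2 where C2: "C2 \<in> ?K" "w \<subseteq> C2"
      using sub_class(2)[OF ctx u(1) w(1) wu assms(6)[symmetric]] by blast
    have C1s: "C1 \<subseteq> u" and C2s: "C2 \<subseteq> u"
      using classes_basic(3)[OF um finX fu uX u(2)] C1 C2 by blast+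
    have ne: "C1 \<noteq> C2"
    proof
      assume "C1 = C2"
      hence "u \<subseteq> C1" using C1(2) C2(2) uvw by auto
      hence "C1 = u" using C1s by (rule subset_antisym[rotated])
      moreover have "diam C1 d < diam u d" using class_diam[OF um finX fu uX u(2) C1(1)] .
      ultimately show False by simp
    qed
    have dj: "C1 \<inter> C2 = {}" using classes_basic(4)[OF um finX fu uX u(2) C1(1) C2(1)] ne by blast
    have "v = C1" using C1(2) C2(2) C1s dj uvw by auto
    moreover have "w = C2" using C1(2) C2(2) C2s dj uvw by auto
    ultimately show "rt_child X d u v \<and> rt_child X d u w"
      unfolding rt_child_def using assms(2) C1(1) C2(1) by simp
  qed
qed

end
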